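(* Let $\varphi$ be a smooth skew-morphism of a finite group $A$, of order $n$, with power function $\pi:A\to\mathbb{Z}_n$. Then: (i) $\pi$ takes values in the unit group $\mathbb{Z}_n^*$ and is a group homomorphism $A\to\mathbb{Z}_n^*$ whose kernel is $\mathrm{Ker}\,\varphi$; (ii) for any $\varphi$-invariant normal subgroup $N$ of $A$, the induced skew-morphism $\bar\varphi$ of $A/N$ is smooth, and if $N=\mathrm{Ker}\,\varphi$ then $\bar\varphi$ is the identity permutation; (iii) for every positive integer $k$, $\varphi^k$ is a smooth skew-morphism of $A$; (iv) for every automorphism $\gamma$ of $A$, $\gamma^{-1}\varphi\gamma$ is a smooth skew-morphism of $A$.
   Context: A skew-morphism of a finite group $A$ is a permutation $\varphi$ of the set $A$ with $\varphi(1)=1$ for which there exists a function $\pi:A\to\mathbb{Z}_n$, where $n$ is the order of $\varphi$ as a permutation, such that $\varphi(xy)=\varphi(x)\varphi^{\pi(x)}(y)$ for all $x,y\in A$; $\pi$ is the power function. The kernel is $\mathrm{Ker}\,\varphi=\{x\in A:\pi(x)=1\}$, and the core is $\mathrm{Core}\,\varphi=\bigcap_{i=1}^n\varphi^i(\mathrm{Ker}\,\varphi)$, a $\varphi$-invariant normal subgroup. $\varphi$ is smooth if $\varphi(x)\in x\,\mathrm{Core}\,\varphi$ for all $x\in A$. For a $\varphi$-invariant normal subgroup $N$ (i.e. $\varphi(N)=N$), the induced skew-morphism of $A/N$ is $\bar\varphi(xN)=\varphi(x)N$, with power function $\bar\pi(xN)\equiv\pi(x)\pmod{|\bar\varphi|}$.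 *)

theory Defs
  imports "HOL-Algebra.Algebra"
begin

definition perm_ord :: "('a, 'b) monoid_scheme \<Rightarrow> ('a \<Rightarrow> 'a) \<Rightarrow> nat" where
  "perm_ord G phi = (LEAST n. 0 < n \<and> (\<forall>x\<in>carrier G. (phi ^^ n) x = x))"

(* phi is a skew-morphism of G with power function pw : A -> Z_n,
   Z_n represented by {0..<n}, n = perm_ord G phi *)
definition skew_morphism :: "('a, 'b) monoid_scheme \<Rightarrow> ('a \<Rightarrow> 'a) \<Rightarrow> ('a \<Rightarrow> nat) \<Rightarrow> bool" where
  "skew_morphism G phi pw \<longleftrightarrow>
     bij_betw phi (carrier G) (carrier G) \<and> phi \<one>\<^bsub>G\<^esub> = \<one>\<^bsub>G\<^esub> \<and>
     (\<forall>x\<in>carrier G. pw x < perm_ord G phi) \<and>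
     (\<forall>x\<in>carrier G. \<forall>y\<in>carrier G.
        phi (x \<otimes>\<^bsub>G\<^esub> y) = phi x \<otimes>\<^bsub>G\<^esub> (phi ^^ pw x) y)"

definition skew_kernel :: "('a, 'b) monoid_scheme \<Rightarrow> ('a \<Rightarrow> 'a) \<Rightarrow> ('a \<Rightarrow> nat) \<Rightarrow> 'a set" where
  "skew_kernel G phi pw = {x \<in> carrier G. pw x = 1 mod perm_ord G phi}"

definition skew_core :: "('a, 'b) monoid_scheme \<Rightarrow> ('a \<Rightarrow> 'a) \<Rightarrow> ('a \<Rightarrow> nat) \<Rightarrow> 'a set" where
  "skew_core G phi pw = (\<Inter>i\<in>{1..perm_ord G phi}. (phi ^^ i) ` skew_kernel G phi pw)"

definition smooth_skew :: "('a, 'b) monoid_scheme \<Rightarrow> ('a \<Rightarrow> 'a) \<Rightarrow> ('a \<Rightarrow> nat) \<Rightarrow> bool" where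
  "smooth_skew G phi pw \<longleftrightarrow> skew_morphism G phi pw \<and>
     (\<forall>x\<in>carrier G. phi x \<in> x <#\<^bsub>G\<^esub> skew_core G phi pw)"

definition is_smooth_skew :: "('a, 'b) monoid_scheme \<Rightarrow> ('a \<Rightarrow> 'a) \<Rightarrow> bool" where
  "is_smooth_skew G phi \<longleftrightarrow> (\<exists>pw. smooth_skew G phi pw)"

(* induced map on A/N: xN |-> phi(x)N (cosets of G Mod N are N #> x) *)
definition induced_skew :: "('a, 'b) monoid_scheme \<Rightarrow> 'a set \<Rightarrow> ('a \<Rightarrow> 'a) \<Rightarrow> 'a set \<Rightarrow> 'a set" where
  "induced_skew G N phi = (\<lambda>C. N #>\<^bsub>G\<^esub> phi (SOME x. x \<in> C))"

definition induced_power :: "('a, 'b) monoid_scheme \<Rightarrow> 'a set \<Rightarrow> ('a \<Rightarrow> 'a) \<Rightarrow> ('a \<Rightarrow> nat) \<Rightarrow> 'a set \<Rightarrow> nat" where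
  "induced_power G N phi pw =
     (\<lambda>C. pw (SOME x. x \<in> C) mod perm_ord (G Mod N) (induced_skew G N phi))"

definition Zn_units :: "nat \<Rightarrow> nat monoid" where
  "Zn_units n = \<lparr>carrier = {k. k < n \<and> coprime k n}, monoid.mult = (\<lambda>a b. (a * b) mod n), monoid.one = 1 mod n\<rparr>"

end

theory Submission
  imports Defs
begin


definition per :: "('a, 'b) monoid_scheme \<Rightarrow> ('a \<Rightarrow> 'a) \<Rightarrow> nat \<Rightarrow> bool" where
  "per G f k \<longleftrightarrow> (\<forall>x\<in>carrier G. (f ^^ k) x = x)"

lemma funpow_closed: "(\<And>x. x \<in> S \<Longrightarrow> f x \<in> S) \<Longrightarrow> x \<in> S \<Longrightarrow> (f ^^ k) x \<in> S"
  by (induction k) auto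

lemma per_mult: "per G f k \<Longrightarrow> per G f (k * q)"
proof (induction q)
  case 0 then show ?case by (simp add: per_def)
next
  case (Suc q)
  then show ?case by (simp add: per_def funpow_add)
qed

lemma perm_ord_per: "perm_ord G f = (LEAST n. 0 < n \<and> per G f n)"
  by (simp add: perm_ord_def per_def)

lemma po_basic:
  assumes "per G f n" "0 < n"
  shows "0 < perm_ord G f" "per G f (perm_ord G f)"
proof -
  have "0 < perm_ord G f \<and> per G f (perm_ord G f)"
    unfolding perm_ord_def per_def[symmetric] by (rule LeastI[of _ n]) (use assms in auto)
  then show "0 < perm_ord G f" "per G f (perm_ord G f)" by auto
qed

lemma po_mod:
  assumes "per G f n" "0 < n" "x \<in> carrier G"
  shows "(f ^^ a) x = (f ^^ (a mod perm_ord G f)) x"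
proof -
  let ?o = "perm_ord G f"
  have p: "per G f (?o * (a div ?o))" using po_basic[OF assms(1,2)] per_mult by blast
  have "(f ^^ a) x = (f ^^ (a mod ?o)) ((f ^^ (?o * (a div ?o))) x)"
    by (metis comp_apply funpow_add mod_mult_div_eq mult.commute)
  also have "... = (f ^^ (a mod ?o)) x" using p assms(3) by (simp add: per_def)
  finally show ?thesis .
qed

lemma po_dvd:
  assumes "per G f n" "0 < n" "per G f k"
  shows "perm_ord G f dvd k"
proof (rule ccontr)
  let ?o = "perm_ord G f"
  assume "\<not> ?o dvd k"
  then have "0 < k mod ?o" by (simp add: dvd_eq_mod_eq_0)
  moreover have "per G f (k mod ?o)" unfolding per_def
  proof
    fix x assume x: "x \<in> carrier G"
    then have "(f ^^ (k mod ?o)) x = (f ^^ k) x" using po_mod[OF assms(1,2) x, of k] by simp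
    then show "(f ^^ (k mod ?o)) x = x" using assms(3) x by (simp add: per_def)
  qed
  moreover have "k mod ?o < ?o" using po_basic[OF assms(1,2)] by simp
  moreover have "\<not> (0 < k mod ?o \<and> per G f (k mod ?o))"
    by (rule not_less_Least) (use \<open>k mod ?o < ?o\<close> in \<open>simp add: perm_ord_per\<close>)
  ultimately show False by blast
qed

lemma po_eq:
  assumes "per G f n" "0 < n" "\<And>x. x \<in> carrier G \<Longrightarrow> f x \<in> carrier G"
    and eq: "\<And>x. x \<in> carrier G \<Longrightarrow> (f ^^ a) x = (f ^^ b) x"
  shows "a mod perm_ord G f = b mod perm_ord G f"
proof -
  have gen: "a mod perm_ord G f = b mod perm_ord G f"
    if le: "b \<le> a" and eq: "\<And>x. x \<in> carrier G \<Longrightarrow> (f ^^ a) x = (f ^^ b) x" for a b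
  proof -
    have pb: "per G f (n * b)" using per_mult[OF assms(1)] by blast
    have "per G f (a - b)" unfolding per_def
    proof
      fix y assume y: "y \<in> carrier G"
      let ?z = "(f ^^ (n * b - b)) y"
      have z: "?z \<in> carrier G" using funpow_closed[of "carrier G" f] assms(3) y by blast
      have nb: "n * b - b + b = n * b" using assms(2) by (simp add: le_add_diff_inverse2)
      have "(f ^^ b) ?z = (f ^^ (b + (n * b - b))) y" by (simp only: funpow_add comp_apply)
      then have yz: "(f ^^ b) ?z = y"
        using pb y nb by (simp add: per_def add.commute)
      have ab: "a - b + b = a" using le by simp
      have "(f ^^ (a - b)) y = (f ^^ (a - b)) ((f ^^ b) ?z)" using yz by simp
      also have "... = (f ^^ (a - b + b)) ?z" by (simp only: funpow_add comp_apply)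
      finally have "(f ^^ (a - b)) y = (f ^^ a) ?z" using ab by simp
      also have "... = y" using eq[OF z] yz by simp
      finally show "(f ^^ (a - b)) y = y" .
    qed
    then have "perm_ord G f dvd a - b" using po_dvd assms(1,2) by blast
    then show ?thesis using le by (simp add: mod_eq_dvd_iff_nat)
  qed
  show ?thesis
  proof (cases "b \<le> a")
    case True then show ?thesis using gen[of b a] eq by blast
  next
    case False
    then have "b mod perm_ord G f = a mod perm_ord G f" using gen[of a b] eq by force
    then show ?thesis by simp
  qed
qed

lemma bij_per:
  assumes "bij_betw f S S" "finite S"
  shows "\<exists>n>0. \<forall>x\<in>S. (f ^^ n) x = x"
proof -
  define F where "F k = restrict (f ^^ k) S" for k
  have cl: "\<And>x. x \<in> S \<Longrightarrow> f x \<in> S" using assms(1) unfolding bij_betw_def by blast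
  have clk: "\<And>x k. x \<in> S \<Longrightarrow> (f ^^ k) x \<in> S" by (rule funpow_closed[of S f, OF cl])
  have sub: "F ` UNIV \<subseteq> S \<rightarrow>\<^sub>E S" unfolding F_def using clk by auto
  have "finite (S \<rightarrow>\<^sub>E S)" using assms(2) by (intro finite_PiE) auto
  then have fin: "finite (F ` UNIV)" using sub by (rule finite_subset[rotated])
  have "\<not> inj F"
  proof
    assume "inj F"
    then have "finite (UNIV :: nat set)" using finite_imageD[OF fin] by blast
    then show False by simp
  qed
  then obtain i j where ij: "i \<noteq> j" "F i = F j" unfolding inj_def by auto
  have inj: "inj_on (f ^^ k) S" for k
  proof (induction k)
    case 0 then show ?case by simp
  next
    case (Suc k)
    have "inj_on f S" using assms(1) bij_betw_def by blast
    moreover have "(f ^^ k) ` S \<subseteq> S" using clk by blast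
    ultimately have "inj_on (f \<circ> (f ^^ k)) S" using Suc comp_inj_on inj_on_subset by blast
    then show ?case by (simp add: o_def)
  qed
  have main: "\<exists>n>0. \<forall>x\<in>S. (f ^^ n) x = x" if "i < j" "F i = F j" for i j
  proof (intro exI[of _ "j - i"] conjI ballI)
    show "0 < j - i" using that by simp
    fix x assume x: "x \<in> S"
    have ji: "i + (j - i) = j" using that by simp
    have "(f ^^ i) ((f ^^ (j - i)) x) = (f ^^ (i + (j - i))) x" by (simp only: funpow_add comp_apply)
    also have "... = (f ^^ j) x" using ji by simp
    also have "... = (f ^^ i) x" using fun_cong[OF that(2), of x] x unfolding F_def by simp
    finally have "(f ^^ i) ((f ^^ (j - i)) x) = (f ^^ i) x" .
    then show "(f ^^ (j - i)) x = x"
      using inj[of i] x clk by (auto dest: inj_onD)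
  qed
  show ?thesis
  proof (cases "i < j")
    case True then show ?thesis using main ij by blast
  next
    case False then have "j < i" using ij by simp
    then show ?thesis using main ij by metis
  qed
qed



lemma funpow_app: "(f ^^ a) ((f ^^ b) y) = (f ^^ (a + b)) y"
  by (simp add: funpow_add)

locale sk = group G for G :: "('a, 'b) monoid_scheme" (structure) +
  fixes phi :: "'a \<Rightarrow> 'a" and pw :: "'a \<Rightarrow> nat"
  assumes fin: "finite (carrier G)" and skew: "skew_morphism G phi pw"
begin

abbreviation "no \<equiv> perm_ord G phi"

lemmas skew' = skew[unfolded skew_morphism_def]
lemma bij: "bij_betw phi (carrier G) (carrier G)" using skew' by blast
lemma phi_closed[simp]: "x \<in> carrier G \<Longrightarrow> phi x \<in> carrier G" using bij bij_betwE by blast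
lemma phin_closed[simp]: "x \<in> carrier G \<Longrightarrow> (phi ^^ k) x \<in> carrier G"
  using funpow_closed[of "carrier G" phi] by simp
lemma phi_one[simp]: "phi \<one> = \<one>" using skew' by blast
lemma pw_lt: "x \<in> carrier G \<Longrightarrow> pw x < no" using skew' by blast
lemma skew_eq: "x \<in> carrier G \<Longrightarrow> y \<in> carrier G \<Longrightarrow> phi (x \<otimes> y) = phi x \<otimes> (phi ^^ pw x) y"
  using skew' by blast

lemma ex_per: "\<exists>n>0. per G phi n" using bij_per[OF bij fin] by (simp add: per_def)

definition "n0 = (SOME n. 0 < n \<and> per G phi n)"
lemma n0: "0 < n0" "per G phi n0" using someI_ex[OF ex_per] by (auto simp: n0_def)

lemma no_pos: "0 < no" using po_basic[OF n0(2,1)] by blast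
lemma per_no: "per G phi no" using po_basic[OF n0(2,1)] by blast
lemma phi_no[simp]: "x \<in> carrier G \<Longrightarrow> (phi ^^ no) x = x" using per_no unfolding per_def by (rule bspec)
lemma phi_mod: "x \<in> carrier G \<Longrightarrow> (phi ^^ a) x = (phi ^^ (a mod no)) x"
  by (rule po_mod[OF n0(2,1)])
lemma phi_eq_mod: "(\<And>x. x \<in> carrier G \<Longrightarrow> (phi ^^ a) x = (phi ^^ b) x) \<Longrightarrow> a mod no = b mod no"
  by (rule po_eq[OF n0(2,1) phi_closed])
lemma no_dvd: "per G phi k \<Longrightarrow> no dvd k" by (rule po_dvd[OF n0(2,1)])

definition sig :: "'a \<Rightarrow> nat \<Rightarrow> nat" where "sig x k = (\<Sum>i<k. pw ((phi ^^ i) x))"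

lemma phik_mult: "x \<in> carrier G \<Longrightarrow> y \<in> carrier G \<Longrightarrow>
   (phi ^^ k) (x \<otimes> y) = (phi ^^ k) x \<otimes> (phi ^^ (sig x k)) y"
proof (induction k)
  case 0 then show ?case by (simp add: sig_def)
next
  case (Suc k)
  have "(phi ^^ Suc k) (x \<otimes> y) = phi ((phi ^^ k) x \<otimes> (phi ^^ (sig x k)) y)" using Suc by simp
  also have "... = (phi ^^ Suc k) x \<otimes> (phi ^^ pw ((phi ^^ k) x)) ((phi ^^ (sig x k)) y)"
    using Suc by (simp add: skew_eq)
  also have "... = (phi ^^ Suc k) x \<otimes> (phi ^^ (sig x (Suc k))) y"
    by (simp add: sig_def funpow_app add.commute)
  finally show ?case .
qed

lemma pw_mult_sig: "x \<in> carrier G \<Longrightarrow> y \<in> carrier G \<Longrightarrow> pw (x \<otimes> y) = sig y (pw x) mod no"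
proof -
  assume x: "x \<in> carrier G" and y: "y \<in> carrier G"
  have "(phi ^^ pw (x \<otimes> y)) z = (phi ^^ sig y (pw x)) z" if z: "z \<in> carrier G" for z
  proof -
    let ?a = "phi x" and ?b = "(phi ^^ pw x) y" and ?c = "(phi ^^ pw (x \<otimes> y)) z"
      and ?d = "(phi ^^ sig y (pw x)) z"
    have cl: "?a \<in> carrier G" "?b \<in> carrier G" "?c \<in> carrier G" "?d \<in> carrier G"
      using x y z by auto
    have A: "phi ((x \<otimes> y) \<otimes> z) = (?a \<otimes> ?b) \<otimes> ?c"
      using skew_eq[of "x \<otimes> y" z] skew_eq[of x y] x y z by simp
    have B: "phi (x \<otimes> (y \<otimes> z)) = ?a \<otimes> (?b \<otimes> ?d)"
      using skew_eq[of x "y \<otimes> z"] phik_mult[of y z "pw x"] x y z by simp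
    have "(x \<otimes> y) \<otimes> z = x \<otimes> (y \<otimes> z)" using x y z by (rule m_assoc)
    then have "(?a \<otimes> ?b) \<otimes> ?c = (?a \<otimes> ?b) \<otimes> ?d"
      using A B m_assoc[OF cl(1,2,4)] by simp
    then show ?thesis using l_cancel[of "?a \<otimes> ?b" ?c ?d] cl by simp
  qed
  then have "pw (x \<otimes> y) mod no = sig y (pw x) mod no" using phi_eq_mod by blast
  then show ?thesis using pw_lt[of "x \<otimes> y"] x y by simp
qed

lemma pw_one: "pw \<one> = 1 mod no"
proof -
  have "(phi ^^ pw \<one>) y = (phi ^^ 1) y" if "y \<in> carrier G" for y
    using skew_eq[of \<one> y] that by simp
  then have "pw \<one> mod no = 1 mod no" using phi_eq_mod by blast
  then show ?thesis using pw_lt[of \<one>] by simp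
qed

lemma ker_core:
  assumes "K \<subseteq> skew_kernel G phi pw" "\<And>x. x \<in> K \<Longrightarrow> phi x \<in> K"
  shows "K \<subseteq> skew_core G phi pw"
proof
  fix k assume k: "k \<in> K"
  have kc: "k \<in> carrier G" using assms(1) k by (auto simp: skew_kernel_def)
  have "k \<in> (phi ^^ i) ` skew_kernel G phi pw" if "i \<in> {1..no}" for i
  proof -
    have "(phi ^^ (no - i)) k \<in> K" using funpow_closed[of K phi] assms(2) k by blast
    moreover have "(phi ^^ i) ((phi ^^ (no - i)) k) = k"
      using that kc by (simp add: funpow_app)
    ultimately show ?thesis using assms(1) by (intro image_eqI[of _ _ "(phi ^^ (no - i)) k"]) auto
  qed
  then show "k \<in> skew_core G phi pw" by (simp add: skew_core_def)
qed

end



lemma sum_mod_one: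
  assumes "\<And>i. i < k \<Longrightarrow> f i mod n = 1 mod (n::nat)"
  shows "(\<Sum>i<k. f i) mod n = k mod n"
  using assms
proof (induction k)
  case 0 then show ?case by simp
next
  case (Suc k)
  have "(\<Sum>i<Suc k. f i) mod n = ((\<Sum>i<k. f i) mod n + f k mod n) mod n"
    by (simp add: mod_add_eq)
  also have "... = (k mod n + 1 mod n) mod n" using Suc by simp
  also have "... = Suc k mod n" using mod_add_eq[of k n 1] by simp
  finally show ?case .
qed

locale ssk = sk +
  assumes smooth: "\<forall>x\<in>carrier G. phi x \<in> x <# skew_core G phi pw"
begin

abbreviation "Ker \<equiv> skew_kernel G phi pw"
abbreviation "Core \<equiv> skew_core G phi pw"

lemma ker_carrier: "Ker \<subseteq> carrier G" by (auto simp: skew_kernel_def)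
lemma ker_pw: "c \<in> Ker \<Longrightarrow> pw c = 1 mod no" by (simp add: skew_kernel_def)
lemma kerI: "c \<in> carrier G \<Longrightarrow> pw c = 1 mod no \<Longrightarrow> c \<in> Ker" by (simp add: skew_kernel_def)

lemma core_ker: "Core \<subseteq> Ker"
proof
  fix c assume "c \<in> Core"
  then have "c \<in> (phi ^^ no) ` Ker" using no_pos by (simp add: skew_core_def)
  then obtain k where k: "k \<in> Ker" "c = (phi ^^ no) k" by blast
  then show "c \<in> Ker" using ker_carrier by auto
qed

lemma core_phi: "c \<in> Core \<Longrightarrow> phi c \<in> Core"
proof -
  assume c: "c \<in> Core"
  have "phi c \<in> (phi ^^ i) ` Ker" if i: "i \<in> {1..no}" for i
  proof (cases "i = 1")
    case True then show ?thesis using c core_ker by auto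
  next
    case False
    then have "i - 1 \<in> {1..no}" using i by auto
    then have "c \<in> (phi ^^ (i - 1)) ` Ker" using c by (simp add: skew_core_def)
    then obtain k where k: "k \<in> Ker" "c = (phi ^^ (i - 1)) k" by blast
    have "phi c = (phi ^^ Suc (i - 1)) k" using k by simp
    also have "Suc (i - 1) = i" using i by auto
    finally show ?thesis using k by blast
  qed
  then show ?thesis by (simp add: skew_core_def)
qed

lemma core_phik: "c \<in> Core \<Longrightarrow> (phi ^^ i) c \<in> Core"
  by (induction i) (auto intro: core_phi)

lemma core_carrier: "c \<in> Core \<Longrightarrow> c \<in> carrier G" using core_ker ker_carrier by blast

lemma pw_xc: assumes x: "x \<in> carrier G" and c: "c \<in> Core" shows "pw (x \<otimes> c) = pw x"
proof -
  have "pw (x \<otimes> c) = sig c (pw x) mod no" using pw_mult_sig x core_carrier[OF c] by blast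
  also have "... = pw x mod no" unfolding sig_def
  proof (rule sum_mod_one)
    fix i have "(phi ^^ i) c \<in> Ker" using core_ker core_phik[OF c] by blast
    then have "pw ((phi ^^ i) c) = 1 mod no" by (rule ker_pw)
    then show "pw ((phi ^^ i) c) mod no = 1 mod no" by simp
  qed
  also have "... = pw x" using pw_lt x by simp
  finally show ?thesis .
qed

lemma smoothE: assumes "x \<in> carrier G" obtains c where "c \<in> Core" "phi x = x \<otimes> c"
  using smooth assms unfolding l_coset_def by blast

lemma pw_phi: "x \<in> carrier G \<Longrightarrow> pw (phi x) = pw x"
  by (metis smoothE pw_xc)

lemma pw_phik: "x \<in> carrier G \<Longrightarrow> pw ((phi ^^ k) x) = pw x"
  by (induction k) (auto simp: pw_phi)

lemma sig_smooth: "x \<in> carrier G \<Longrightarrow> sig x k = k * pw x"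
  by (simp add: sig_def pw_phik)

lemma pw_mult: "x \<in> carrier G \<Longrightarrow> y \<in> carrier G \<Longrightarrow> pw (x \<otimes> y) = pw x * pw y mod no"
  using pw_mult_sig sig_smooth by simp

lemma pw_coprime: assumes x: "x \<in> carrier G" shows "coprime (pw x) no"
proof -
  have "pw x * pw (inv x) mod no = 1 mod no"
    using pw_mult[of x "inv x"] x pw_one by simp
  then have "coprime (pw x * pw (inv x) mod no) no" by (simp add: no_pos)
  then have "coprime (pw x * pw (inv x)) no" using no_pos by simp
  then show ?thesis by simp
qed

lemma part1: "pw \<in> hom G (Zn_units no) \<and> kernel G (Zn_units no) pw = Ker"
proof
  show "pw \<in> hom G (Zn_units no)"
    unfolding hom_def using pw_lt pw_coprime pw_mult by (auto simp: Zn_units_def)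
  show "kernel G (Zn_units no) pw = Ker"
    by (auto simp: kernel_def skew_kernel_def Zn_units_def)
qed

lemma pw_inv_mult: assumes x: "x \<in> carrier G" and y: "y \<in> carrier G" and e: "pw y = pw x"
  shows "inv x \<otimes> y \<in> Ker"
proof (rule kerI)
  show "inv x \<otimes> y \<in> carrier G" using x y by simp
  have "pw (inv x \<otimes> y) = pw (inv x) * pw x mod no" using pw_mult x y e by simp
  also have "... = pw (inv x \<otimes> x)" using pw_mult[of "inv x" x] x by simp
  also have "... = 1 mod no" using x pw_one by simp
  finally show "pw (inv x \<otimes> y) = 1 mod no" .
qed

lemma phik_coset: assumes x: "x \<in> carrier G" obtains c where "c \<in> Ker" "(phi ^^ k) x = x \<otimes> c"
proof -
  let ?c = "inv x \<otimes> (phi ^^ k) x"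
  have "?c \<in> Ker" using pw_inv_mult x pw_phik by simp
  moreover have "(phi ^^ k) x = x \<otimes> ?c" using x by (simp add: m_assoc[symmetric])
  ultimately show ?thesis using that by blast
qed

lemma ker_phi: "c \<in> Ker \<Longrightarrow> phi c \<in> Ker"
  using pw_phi ker_carrier by (auto simp: skew_kernel_def)

lemma ker_phik: "c \<in> Ker \<Longrightarrow> (phi ^^ k) c \<in> Ker"
  by (induction k) (auto intro: ker_phi)

end


lemma lcosI: "c \<in> K \<Longrightarrow> y = x \<otimes>\<^bsub>G\<^esub> c \<Longrightarrow> y \<in> x <#\<^bsub>G\<^esub> K"
  unfolding l_coset_def by blast

lemma lcos_mono: "K \<subseteq> K' \<Longrightarrow> y \<in> x <#\<^bsub>G\<^esub> K \<Longrightarrow> y \<in> x <#\<^bsub>G\<^esub> K'"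
  unfolding l_coset_def by blast

context ssk
begin

lemma part3: assumes k: "0 < k" shows "is_smooth_skew G (phi ^^ k)"
proof -
  let ?psi = "phi ^^ k"
  let ?m = "perm_ord G ?psi"
  define p where "p x = pw x mod ?m" for x
  have perpsi: "per G ?psi no"
  proof -
    have "per G phi (no * k)" using per_mult[OF per_no] .
    then show ?thesis by (simp add: per_def funpow_mult mult.commute)
  qed
  have m: "0 < ?m" "per G ?psi ?m" using po_basic[OF perpsi no_pos] by auto
  have mdvd: "?m dvd no" using po_dvd[OF perpsi no_pos perpsi] .
  have psimod: "(?psi ^^ a) y = (?psi ^^ (a mod ?m)) y" if "y \<in> carrier G" for a y
    using po_mod[OF perpsi no_pos that] .
  have sk: "skew_morphism G ?psi p"
    unfolding skew_morphism_def
  proof (intro conjI ballI)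
    show "bij_betw ?psi (carrier G) (carrier G)" using bij by (rule bij_betw_funpow)
    show "?psi \<one> = \<one>" by (induction k) auto
    fix x assume x: "x \<in> carrier G"
    show "p x < ?m" using m by (simp add: p_def)
    fix y assume y: "y \<in> carrier G"
    have "?psi (x \<otimes> y) = ?psi x \<otimes> (phi ^^ sig x k) y" using phik_mult x y by blast
    also have "(phi ^^ sig x k) y = (?psi ^^ pw x) y" using x by (simp add: sig_smooth funpow_mult)
    also have "... = (?psi ^^ p x) y" unfolding p_def by (rule psimod[OF y])
    finally show "?psi (x \<otimes> y) = ?psi x \<otimes> (?psi ^^ p x) y" .
  qed
  interpret S: sk G ?psi p using sk fin by unfold_locales
  have K1: "Ker \<subseteq> skew_kernel G ?psi p"
  proof
    fix c assume c: "c \<in> Ker"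
    have "p c = 1 mod no mod ?m" using ker_pw[OF c] by (simp add: p_def)
    also have "... = 1 mod ?m" using mdvd by (rule mod_mod_cancel)
    finally show "c \<in> skew_kernel G ?psi p" using c ker_carrier by (auto simp: skew_kernel_def)
  qed
  have K2: "\<And>c. c \<in> Ker \<Longrightarrow> ?psi c \<in> Ker" by (rule ker_phik)
  have core: "Ker \<subseteq> skew_core G ?psi p" by (rule S.ker_core[OF K1 K2])
  have "smooth_skew G ?psi p" unfolding smooth_skew_def
  proof (intro conjI ballI sk)
    fix x assume x: "x \<in> carrier G"
    obtain c where c: "c \<in> Ker" "?psi x = x \<otimes> c" using phik_coset[OF x] by blast
    show "?psi x \<in> x <# skew_core G ?psi p" using c core by (intro lcosI[of c]) auto
  qed
  then show ?thesis unfolding is_smooth_skew_def by blast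
qed

end


context ssk
begin

lemma part4: assumes gi: "gamma \<in> iso G G"
  shows "is_smooth_skew G (\<lambda>x. inv_into (carrier G) gamma (phi (gamma x)))"
proof -
  define g' where "g' = inv_into (carrier G) gamma"
  define psi where "psi x = g' (phi (gamma x))" for x
  have gbij: "bij_betw gamma (carrier G) (carrier G)" using gi by (simp add: iso_def)
  have ghom: "gamma \<in> hom G G" using gi by (simp add: iso_def)
  have g'iso: "g' \<in> iso G G" unfolding g'_def by (rule iso_set_sym[OF gi])
  have g'bij: "bij_betw g' (carrier G) (carrier G)" using g'iso by (simp add: iso_def)
  have g'hom: "g' \<in> hom G G" using g'iso by (simp add: iso_def)
  have gc: "x \<in> carrier G \<Longrightarrow> gamma x \<in> carrier G" for x using gbij bij_betwE by blast
  have g'c: "x \<in> carrier G \<Longrightarrow> g' x \<in> carrier G" for x using g'bij bij_betwE by blast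
  have gg': "x \<in> carrier G \<Longrightarrow> gamma (g' x) = x" for x
    unfolding g'_def using gbij by (simp add: bij_betw_inv_into_right)
  have g'g: "x \<in> carrier G \<Longrightarrow> g' (gamma x) = x" for x
    unfolding g'_def using gbij by (simp add: bij_betw_inv_into_left)
  have g'mult: "x \<in> carrier G \<Longrightarrow> y \<in> carrier G \<Longrightarrow> g' (x \<otimes> y) = g' x \<otimes> g' y" for x y
    using g'hom by (simp add: hom_def)
  have gmult: "x \<in> carrier G \<Longrightarrow> y \<in> carrier G \<Longrightarrow> gamma (x \<otimes> y) = gamma x \<otimes> gamma y" for x y
    using ghom by (simp add: hom_def)
  have psic: "x \<in> carrier G \<Longrightarrow> psi x \<in> carrier G" for x by (simp add: psi_def gc g'c)
  have psik: "x \<in> carrier G \<Longrightarrow> (psi ^^ j) x = g' ((phi ^^ j) (gamma x))" for x j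
  proof (induction j)
    case 0 then show ?case by (simp add: g'g)
  next
    case (Suc j)
    then show ?case by (simp add: psi_def gg' gc)
  qed
  have perpsi: "per G psi no" unfolding per_def using psik g'g gc by simp
  let ?m = "perm_ord G psi"
  have m: "0 < ?m" "per G psi ?m" using po_basic[OF perpsi no_pos] by auto
  have "per G phi ?m" unfolding per_def
  proof
    fix y assume y: "y \<in> carrier G"
    have "g' ((phi ^^ ?m) y) = g' y"
      using m(2) psik[OF g'c[OF y], of ?m] gg'[OF y] y by (simp add: per_def g'c)
    then have "gamma (g' ((phi ^^ ?m) y)) = gamma (g' y)" by simp
    then show "(phi ^^ ?m) y = y" using gg' y by simp
  qed
  then have "no dvd ?m" by (rule no_dvd)
  moreover have "?m dvd no" using po_dvd[OF perpsi no_pos perpsi] .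
  ultimately have meq: "?m = no" by (simp add: dvd_antisym)
  define p where "p x = pw (gamma x)" for x
  have sk: "skew_morphism G psi p"
    unfolding skew_morphism_def
  proof (intro conjI ballI)
    have "bij_betw (g' \<circ> phi \<circ> gamma) (carrier G) (carrier G)"
      using gbij bij g'bij by (intro bij_betw_trans) auto
    then show "bij_betw psi (carrier G) (carrier G)" by (simp add: psi_def[abs_def] o_def)
    show "psi \<one> = \<one>" using hom_one[OF ghom is_group is_group] g'g[of \<one>] by (simp add: psi_def)
    fix x assume x: "x \<in> carrier G"
    show "p x < ?m" using meq pw_lt gc x by (simp add: p_def)
    fix y assume y: "y \<in> carrier G"
    have "psi (x \<otimes> y) = g' (phi (gamma x) \<otimes> (phi ^^ pw (gamma x)) (gamma y))"
      using x y by (simp add: psi_def gmult skew_eq gc)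
    also have "... = psi x \<otimes> (psi ^^ p x) y"
      using x y by (simp add: g'mult gc psi_def psik p_def)
    finally show "psi (x \<otimes> y) = psi x \<otimes> (psi ^^ p x) y" .
  qed
  interpret S: sk G psi p using sk fin by unfold_locales
  define K where "K = {x \<in> carrier G. gamma x \<in> Ker}"
  have K1: "K \<subseteq> skew_kernel G psi p"
    using meq by (auto simp: K_def skew_kernel_def p_def)
  have K2: "\<And>c. c \<in> K \<Longrightarrow> psi c \<in> K"
    using psic gg' ker_phi gc by (auto simp: K_def psi_def)
  have core: "K \<subseteq> skew_core G psi p" by (rule S.ker_core[OF K1 K2])
  have "smooth_skew G psi p" unfolding smooth_skew_def
  proof (intro conjI ballI sk)
    fix x assume x: "x \<in> carrier G"
    obtain c where c: "c \<in> Ker" "(phi ^^ 1) (gamma x) = gamma x \<otimes> c"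
      using phik_coset[OF gc[OF x]] by blast
    have cc: "c \<in> carrier G" using c ker_carrier by blast
    have "psi x = x \<otimes> g' c" using c x cc by (simp add: psi_def g'mult gc g'g)
    moreover have "g' c \<in> K" using cc c by (simp add: K_def g'c gg')
    ultimately show "psi x \<in> x <# skew_core G psi p" using core by (intro lcosI[of "g' c"]) auto
  qed
  then show ?thesis unfolding is_smooth_skew_def psi_def g'_def by blast
qed

end


lemma per_bij:
  assumes cl: "\<And>x. x \<in> carrier G \<Longrightarrow> f x \<in> carrier G" and p: "per G f n" and n: "0 < n"
  shows "bij_betw f (carrier G) (carrier G)"
proof -
  have key: "(f ^^ (n - 1)) (f x) = x" if "x \<in> carrier G" for x
  proof -
    have "(f ^^ (n - 1)) (f x) = (f ^^ Suc (n - 1)) x" by (simp only: funpow_Suc_right comp_apply)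
    also have "Suc (n - 1) = n" using n by simp
    finally show ?thesis using p that by (simp add: per_def)
  qed
  have "inj_on f (carrier G)"
  proof (rule inj_onI)
    fix x y assume "x \<in> carrier G" "y \<in> carrier G" "f x = f y"
    then show "x = y" using key by metis
  qed
  moreover have "f ` carrier G = carrier G"
  proof
    show "f ` carrier G \<subseteq> carrier G" using cl by blast
    show "carrier G \<subseteq> f ` carrier G"
    proof
      fix y assume y: "y \<in> carrier G"
      have "(f ^^ (n - 1)) y \<in> carrier G" using funpow_closed[of "carrier G" f] cl y by blast
      moreover have "f ((f ^^ (n - 1)) y) = y"
      proof -
        have "f ((f ^^ (n - 1)) y) = (f ^^ Suc (n - 1)) y" by simp
        also have "Suc (n - 1) = n" using n by simp
        finally show ?thesis using p y by (simp add: per_def)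
      qed
      ultimately show "y \<in> f ` carrier G" by (metis image_eqI)
    qed
  qed
  ultimately show ?thesis by (simp add: bij_betw_def)
qed

context ssk
begin

lemma pw_xk: "x \<in> carrier G \<Longrightarrow> c \<in> Ker \<Longrightarrow> pw (x \<otimes> c) = pw x"
proof -
  assume x: "x \<in> carrier G" and c: "c \<in> Ker"
  have "pw (x \<otimes> c) = pw x * (1 mod no) mod no" using pw_mult[OF x] c ker_carrier ker_pw by auto
  also have "... = pw x mod no" by (simp add: mod_mult_right_eq)
  also have "... = pw x" using pw_lt[OF x] by simp
  finally show ?thesis .
qed

lemma part2:
  assumes nN: "N \<lhd> G" and pN: "phi ` N = N"
  shows "smooth_skew (G Mod N) (induced_skew G N phi) (induced_power G N phi pw) \<and>
         (N = Ker \<longrightarrow> (\<forall>C\<in>carrier (G Mod N). induced_skew G N phi C = C))"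
proof -
  interpret N: normal N G by (rule nN)
  let ?Q = "G Mod N"
  let ?ps = "induced_skew G N phi"
  let ?pp = "induced_power G N phi pw"
  define r where "r C = (SOME x. x \<in> C)" for C :: "'a set"
  have NC: "N \<subseteq> carrier G" by (rule N.subset)
  have sgN: "subgroup N G" by (rule N.subgroup_axioms)
  have phiN: "h \<in> N \<Longrightarrow> phi h \<in> N" for h using pN by blast
  have phikN: "h \<in> N \<Longrightarrow> (phi ^^ k) h \<in> N" for h k using funpow_closed[of N phi] phiN by blast
  have rc_right: "N #> (x \<otimes> h) = N #> x" if x: "x \<in> carrier G" and h: "h \<in> N" for x h
  proof -
    have hc: "h \<in> carrier G" using h NC by blast
    have e: "x \<otimes> h = (x \<otimes> h \<otimes> inv x) \<otimes> x" using x hc by (simp add: m_assoc)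
    have "x \<otimes> h \<otimes> inv x \<in> N" using N.inv_op_closed2[OF x h] .
    then have "x \<otimes> h \<in> N #> x" using e rcosI[OF _ NC x] by metis
    then show ?thesis using repr_independence[OF _ x sgN] by metis
  qed
  have rc_left: "N #> (h \<otimes> x) = N #> x" if x: "x \<in> carrier G" and h: "h \<in> N" for x h
  proof -
    have "h \<otimes> x \<in> N #> x" using rcosI[OF h NC x] .
    then show ?thesis using repr_independence[OF _ x sgN] by metis
  qed
  have rcosE: "\<exists>h\<in>N. x' = h \<otimes> x" if "x' \<in> N #> x" for x x'
    using that unfolding r_coset_def by blast
  have W: "N #> phi x' = N #> phi x" if x: "x \<in> carrier G" and x': "x' \<in> N #> x" for x x'
  proof -
    obtain h where h: "h \<in> N" "x' = h \<otimes> x" using rcosE[OF x'] by blast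
    have hc: "h \<in> carrier G" using h NC by blast
    let ?h' = "inv x \<otimes> h \<otimes> x"
    have h': "?h' \<in> N" using N.inv_op_closed1[OF x h(1)] .
    have h'c: "?h' \<in> carrier G" using h' NC by blast
    have "x \<otimes> ?h' = h \<otimes> x" using x hc by (simp add: m_assoc[symmetric])
    then have "phi x' = phi x \<otimes> (phi ^^ pw x) ?h'" using h(2) skew_eq[OF x h'c] by simp
    then show ?thesis using rc_right[OF phi_closed[OF x] phikN[OF h']] by simp
  qed
  have carQ: "carrier ?Q = rcosets N" by (simp add: FactGroup_def)
  have rep: "r C \<in> C \<and> r C \<in> carrier G \<and> C = N #> r C" if C: "C \<in> carrier ?Q" for C
  proof -
    obtain a where a: "a \<in> carrier G" "C = N #> a" using C carQ unfolding RCOSETS_def by blast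
    have "a \<in> C" using a rcos_self[OF a(1) sgN] by simp
    then have rC: "r C \<in> C" unfolding r_def by (rule someI)
    then have "r C \<in> carrier G" using a r_coset_subset_G[OF NC a(1)] by blast
    moreover have "C = N #> r C"
    proof -
      have "r C \<in> N #> a" using rC a(2) by blast
      then have "N #> a = N #> r C" by (rule repr_independence[OF _ a(1) sgN])
      then show ?thesis using a(2) by (rule trans[rotated])
    qed
    ultimately show ?thesis using rC by blast
  qed
  have inQ: "x \<in> carrier G \<Longrightarrow> N #> x \<in> carrier ?Q" for x using carQ rcosetsI[OF NC] by simp
  have ps_def: "?ps C = N #> phi (r C)" for C by (simp add: induced_skew_def r_def)
  have Q1: "?ps (N #> x) = N #> phi x" if x: "x \<in> carrier G" for x
  proof -
    have "r (N #> x) \<in> N #> x" using rep[OF inQ[OF x]] by blast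
    then have "N #> phi (r (N #> x)) = N #> phi x" by (rule W[OF x])
    then show ?thesis using ps_def by (rule trans[rotated])
  qed
  have Q2: "(?ps ^^ k) (N #> x) = N #> (phi ^^ k) x" if x: "x \<in> carrier G" for x k
  proof (induction k)
    case 0 then show ?case by simp
  next
    case (Suc k) then show ?case using Q1 x by simp
  qed
  have repE: "\<exists>x. x \<in> carrier G \<and> C = N #> x \<and> r C = x" if "C \<in> carrier ?Q" for C
    using rep[OF that] by blast
  have psC: "?ps C \<in> carrier ?Q" if "C \<in> carrier ?Q" for C
  proof -
    have "r C \<in> carrier G" using rep[OF that] by blast
    then show ?thesis using ps_def inQ by simp
  qed
  have perQ: "per ?Q ?ps no" unfolding per_def
  proof
    fix C assume C: "C \<in> carrier ?Q"
    then obtain x where x: "x \<in> carrier G" "C = N #> x" using repE by blast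
    then show "(?ps ^^ no) C = C" using Q2[OF x(1), of no] by simp
  qed
  let ?m = "perm_ord ?Q ?ps"
  have m: "0 < ?m" "per ?Q ?ps ?m" using po_basic[OF perQ no_pos] by auto
  have pp_def: "?pp C = pw (r C) mod ?m" for C by (simp add: induced_power_def r_def)
  have grpQ: "group ?Q" by (rule N.factorgroup_is_group)
  have finQ: "finite (carrier ?Q)"
  proof -
    have sub: "carrier ?Q \<subseteq> Pow (carrier G)"
    proof
      fix C assume "C \<in> carrier ?Q"
      then obtain x where x: "x \<in> carrier G" "C = N #> x" using repE by blast
      then show "C \<in> Pow (carrier G)" using r_coset_subset_G[OF NC x(1)] by simp
    qed
    show ?thesis by (rule finite_subset[OF sub]) (simp add: fin)
  qed
  have mulQ: "(N #> x) \<otimes>\<^bsub>?Q\<^esub> (N #> y) = N #> (x \<otimes> y)" if "x \<in> carrier G" "y \<in> carrier G" for x y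
    using N.rcos_sum[OF that] by simp
  have skQ: "skew_morphism ?Q ?ps ?pp"
    unfolding skew_morphism_def
  proof (intro conjI ballI)
    show "bij_betw ?ps (carrier ?Q) (carrier ?Q)" using per_bij[OF psC perQ no_pos] by blast
    have "N #> \<one> = N" using NC by simp
    then show "?ps \<one>\<^bsub>?Q\<^esub> = \<one>\<^bsub>?Q\<^esub>" using Q1[of \<one>] by simp
    fix C assume C: "C \<in> carrier ?Q"
    show "?pp C < ?m" using m pp_def by simp
    fix D assume D: "D \<in> carrier ?Q"
    obtain x where x: "x \<in> carrier G" "C = N #> x" "r C = x" using repE[OF C] by blast
    obtain y where y: "y \<in> carrier G" "D = N #> y" using repE[OF D] by blast
    let ?x = x and ?y = y
    have "?ps (C \<otimes>\<^bsub>?Q\<^esub> D) = ?ps (N #> (?x \<otimes> ?y))" using x y mulQ by simp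
    also have "... = N #> (phi ?x \<otimes> (phi ^^ pw ?x) ?y)" using Q1 x y skew_eq by simp
    also have "... = (N #> phi ?x) \<otimes>\<^bsub>?Q\<^esub> (N #> (phi ^^ pw ?x) ?y)" using mulQ x y by simp
    also have "N #> phi ?x = ?ps C" using ps_def x(3) by simp
    also have "N #> (phi ^^ pw ?x) ?y = (?ps ^^ pw ?x) D" using Q2 y by simp
    also have "... = (?ps ^^ ?pp C) D" unfolding pp_def x(3) by (rule po_mod[OF perQ no_pos D])
    finally show "?ps (C \<otimes>\<^bsub>?Q\<^esub> D) = ?ps C \<otimes>\<^bsub>?Q\<^esub> (?ps ^^ ?pp C) D" .
  qed
  interpret S: sk ?Q ?ps ?pp using grpQ finQ skQ by (simp add: sk_def sk_axioms_def)
  have pwN: "pw h mod ?m = 1 mod ?m" if h: "h \<in> N" for h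
  proof -
    have hc: "h \<in> carrier G" using h NC by blast
    have "(?ps ^^ pw h) D = (?ps ^^ 1) D" if D: "D \<in> carrier ?Q" for D
    proof -
      obtain y where y: "y \<in> carrier G" "D = N #> y" "r D = y" using repE[OF D] by blast
      have "(?ps ^^ pw h) D = N #> (phi ^^ pw h) y" using Q2 y by simp
      also have "... = N #> (phi h \<otimes> (phi ^^ pw h) y)" using rc_left phiN[OF h] y by simp
      also have "... = N #> phi (h \<otimes> y)" using skew_eq[OF hc y(1)] by simp
      also have "... = N #> phi y" using W[OF y(1)] rcosI[OF h NC y(1)] by blast
      also have "... = (?ps ^^ 1) D" using ps_def y(3) by simp
      finally show ?thesis .
    qed
    then show ?thesis using po_eq[OF perQ no_pos psC] by blast
  qed
  define Kb where "Kb = (\<lambda>c. N #> c) ` Ker"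
  have K1: "Kb \<subseteq> skew_kernel ?Q ?ps ?pp"
  proof
    fix D assume "D \<in> Kb"
    then obtain c where c: "c \<in> Ker" "D = N #> c" unfolding Kb_def by blast
    have cc: "c \<in> carrier G" using c ker_carrier by blast
    have DQ: "D \<in> carrier ?Q" using c inQ[OF cc] by simp
    have "r D \<in> N #> c" using rep[OF DQ] c by blast
    then obtain h where h: "h \<in> N" "r D = h \<otimes> c" using rcosE by blast
    have "?pp D = pw (h \<otimes> c) mod ?m" using pp_def h by simp
    also have "pw (h \<otimes> c) = pw h" using pw_xk c h NC by blast
    also have "pw h mod ?m = 1 mod ?m" using pwN[OF h(1)] .
    finally show "D \<in> skew_kernel ?Q ?ps ?pp" using DQ by (simp add: skew_kernel_def)
  qed
  have K2: "\<And>D. D \<in> Kb \<Longrightarrow> ?ps D \<in> Kb"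
  proof -
    fix D assume "D \<in> Kb"
    then obtain c where c: "c \<in> Ker" "D = N #> c" unfolding Kb_def by blast
    have "?ps D = N #> phi c" using c Q1 ker_carrier by blast
    then show "?ps D \<in> Kb" using ker_phi[OF c(1)] unfolding Kb_def by blast
  qed
  have core: "Kb \<subseteq> skew_core ?Q ?ps ?pp" by (rule S.ker_core[OF K1 K2])
  have phx: "\<exists>c\<in>Ker. phi x = x \<otimes> c" if "x \<in> carrier G" for x
    using smoothE[OF that] core_ker by blast
  have sm: "smooth_skew ?Q ?ps ?pp" unfolding smooth_skew_def
  proof (intro conjI ballI skQ)
    fix C assume C: "C \<in> carrier ?Q"
    obtain x where x: "x \<in> carrier G" "C = N #> x" "r C = x" using repE[OF C] by blast
    obtain c where c: "c \<in> Ker" "phi x = x \<otimes> c" using phx[OF x(1)] by blast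
    have cc: "c \<in> carrier G" using c ker_carrier by blast
    have "?ps C = N #> (x \<otimes> c)" using ps_def c x(3) by simp
    also have "... = C \<otimes>\<^bsub>?Q\<^esub> (N #> c)" using mulQ[OF x(1) cc] x(2) by simp
    finally have e: "?ps C = C \<otimes>\<^bsub>?Q\<^esub> (N #> c)" .
    have "N #> c \<in> skew_core ?Q ?ps ?pp" using core c unfolding Kb_def by blast
    then show "?ps C \<in> C <#\<^bsub>?Q\<^esub> skew_core ?Q ?ps ?pp" using e by (rule lcosI)
  qed
  have "\<forall>C\<in>carrier ?Q. ?ps C = C" if NK: "N = Ker"
  proof
    fix C assume C: "C \<in> carrier ?Q"
    obtain x where x: "x \<in> carrier G" "C = N #> x" "r C = x" using repE[OF C] by blast
    obtain c where c: "c \<in> Ker" "phi x = x \<otimes> c" using phx[OF x(1)] by blast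
    have "?ps C = N #> (x \<otimes> c)" using ps_def c x(3) by simp
    also have "... = C" using rc_right[OF x(1)] c NK x(2) by simp
    finally show "?ps C = C" .
  qed
  then show ?thesis using sm by blast
qed

end


theorem theorem4:
  fixes G :: "('a, 'b) monoid_scheme" and phi :: "'a \<Rightarrow> 'a" and pw :: "'a \<Rightarrow> nat"
  assumes "group G" and "finite (carrier G)" and "smooth_skew G phi pw"
  shows "(pw \<in> hom G (Zn_units (perm_ord G phi)) \<and>
          kernel G (Zn_units (perm_ord G phi)) pw = skew_kernel G phi pw)
       \<and> (\<forall>N. N \<lhd> G \<and> phi ` N = N \<longrightarrow>
            smooth_skew (G Mod N) (induced_skew G N phi) (induced_power G N phi pw) \<and>
            (N = skew_kernel G phi pw \<longrightarrow>
               (\<forall>C\<in>carrier (G Mod N). induced_skew G N phi C = C)))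
       \<and> (\<forall>k::nat. 0 < k \<longrightarrow> is_smooth_skew G (phi ^^ k))
       \<and> (\<forall>gamma\<in>iso G G. is_smooth_skew G (\<lambda>x. inv_into (carrier G) gamma (phi (gamma x))))"
proof -
  have s: "ssk G phi pw" using assms unfolding smooth_skew_def
    by (simp add: ssk_def ssk_axioms_def sk_def sk_axioms_def)
  interpret ssk G phi pw by (rule s)
  show ?thesis using part1 part2 part3 part4 by blast
qed

end
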